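(* Let $G$ be the 3-dimensional Gauss map on the tetrahedron $S$. For every point $(x,y,z)\in S$ with $x,y,z\in\mathbb{Q}$ there exists $k\ge0$ with $G^k(x,y,z)=(0,0,0)$.
   Context: Let $S = \{(x,y,z)\in\mathbb{R}^3 : 0\le z\le y\le x\le 1\}$. For integers $n\ge1$ define the pieces $\mathbb{A}_n = \{\frac1{n+1} < x \le \frac1n,\ 0\le z\le y\le 1-nx\}$, $\mathbb{B}_n = \{0\le z\le 1-nx < y \le x\}$, $\mathbb{C}_n = \{1-nx < z \le y \le x \le \frac1n\}$ (all subsets of $S$); together with $\{(0,0,0)\}$ they partition $S$. The 3-dimensional Gauss map $G:S\to S$ is $G(0,0,0)=(0,0,0)$, $G(x,y,z)=\left(\frac1x-n,\frac yx,\frac zx\right)$ on $\mathbb{A}_n$, $G(x,y,z)=\left(\frac{1-y}{x}-n+1,\frac{x-y+z}{x},\frac{x-y}{x}\right)$ on $\mathbb{B}_n$, $G(x,y,z)=\left(\frac{1-z}{x}-n+1,\frac{x-z}{x},\frac{y-z}{x}\right)$ on $\mathbb{C}_n$. *)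

theory Defs
  imports "HOL-Analysis.Analysis"
begin

type_synonym pt = "real \<times> real \<times> real"

definition S :: "pt set" where
  "S = {(x,y,z). 0 \<le> z \<and> z \<le> y \<and> y \<le> x \<and> x \<le> 1}"

definition pieceA :: "nat \<Rightarrow> pt set" where
  "pieceA n = {(x,y,z). (x,y,z) \<in> S \<and> 1 / real (n+1) < x \<and> x \<le> 1 / real n
      \<and> 0 \<le> z \<and> z \<le> y \<and> y \<le> 1 - real n * x}"

definition pieceB :: "nat \<Rightarrow> pt set" where
  "pieceB n = {(x,y,z). (x,y,z) \<in> S \<and> 0 \<le> z \<and> z \<le> 1 - real n * x
      \<and> 1 - real n * x < y \<and> y \<le> x}"

definition pieceC :: "nat \<Rightarrow> pt set" where
  "pieceC n = {(x,y,z). (x,y,z) \<in> S \<and> 1 - real n * x < z \<and> z \<le> y \<and> y \<le> x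
      \<and> x \<le> 1 / real n}"

text \<open>The 3-dimensional Gauss map. The pieces (n >= 1) together with the origin
partition S, so the index n and the piece are uniquely determined on S.
Outside S the value is irrelevant (arbitrary).\<close>
definition gauss3 :: "pt \<Rightarrow> pt" where
  "gauss3 p = (case p of (x,y,z) \<Rightarrow>
     if p = (0,0,0) then (0,0,0)
     else if \<exists>n\<ge>1. p \<in> pieceA n then
       (let n = THE n. n \<ge> 1 \<and> p \<in> pieceA n in (1/x - real n, y/x, z/x))
     else if \<exists>n\<ge>1. p \<in> pieceB n then
       (let n = THE n. n \<ge> 1 \<and> p \<in> pieceB n in
          ((1-y)/x - real n + 1, (x-y+z)/x, (x-y)/x))
     else if \<exists>n\<ge>1. p \<in> pieceC n then
       (let n = THE n. n \<ge> 1 \<and> p \<in> pieceC n in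
          ((1-z)/x - real n + 1, (x-z)/x, (y-z)/x))
     else undefined)"

end

theory Submission
  imports Defs
begin

definition intp :: "real \<Rightarrow> pt \<Rightarrow> bool" where
  "intp M p = (case p of (a,b,c) \<Rightarrow> M \<in> \<int> \<and> M*a \<in> \<int> \<and> M*b \<in> \<int> \<and> M*c \<in> \<int>)"

lemma S_mem: "(x,y,z) \<in> S \<longleftrightarrow> 0 \<le> z \<and> z \<le> y \<and> y \<le> x \<and> x \<le> (1::real)"
  by (simp add: S_def)

lemma A_floor:
  assumes "(x,y,z) \<in> pieceA n" "n \<ge> 1"
  shows "\<lfloor>1/x\<rfloor> = int n" and "x > 0"
proof -
  have h: "1/real(n+1) < x" "x \<le> 1/real n" using assms by (auto simp: pieceA_def)
  have "0 < 1/real(n+1)" by simp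
  then show xp: "x > 0" using h by linarith
  have n1: "real n \<le> 1/x" using h(2) xp assms(2) by (simp add: field_simps)
  have n2: "1/x < real n + 1" using h(1) xp by (simp add: field_simps)
  show "\<lfloor>1/x\<rfloor> = int n" using n1 n2 by (simp add: floor_eq_iff)
qed

lemma B_uniq:
  assumes "(x,y,z) \<in> pieceB n" "(x,y,z) \<in> pieceB m"
  shows "n = m"
proof (rule ccontr)
  assume ne: "n \<noteq> m"
  have h: "0 \<le> z" "z \<le> 1 - real n * x" "1 - real n * x < y" "y \<le> x"
       "z \<le> 1 - real m * x" "1 - real m * x < y" 
    using assms by (auto simp: pieceB_def)
  have xp: "x \<ge> 0" using h by linarith
  show False
  proof (cases "n < m")
    case True
    then have "real m \<ge> real n + 1" by simp
    then have "real m * x \<ge> (real n + 1) * x" using xp by (rule mult_right_mono)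
    then show False using h by (simp add: algebra_simps)
  next
    case False
    then have "real n \<ge> real m + 1" using ne by simp
    then have "real n * x \<ge> (real m + 1) * x" using xp by (rule mult_right_mono)
    then show False using h by (simp add: algebra_simps)
  qed
qed

lemma C_uniq:
  assumes "(x,y,z) \<in> pieceC n" "(x,y,z) \<in> pieceC m" "n \<ge> 1" "m \<ge> 1"
  shows "n = m"
proof (rule ccontr)
  assume ne: "n \<noteq> m"
  have h: "1 - real n * x < z" "z \<le> y" "y \<le> x" "x \<le> 1/real n"
       "1 - real m * x < z" "x \<le> 1 / real m"
    using assms by (auto simp: pieceC_def)
  have xp: "x \<ge> 0" using assms by (auto simp: pieceC_def S_def)
  have hn: "real n * x \<le> 1" using h(4) assms(3) by (simp add: field_simps)
  have hm: "real m * x \<le> 1" using h(6) assms(4) by (simp add: field_simps)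
  show False
  proof (cases "n < m")
    case True
    then have "real m \<ge> real n + 1" by simp
    then have "real m * x \<ge> (real n + 1) * x" using xp by (rule mult_right_mono)
    then show False using h hm by (simp add: algebra_simps)
  next
    case False
    then have "real n \<ge> real m + 1" using ne by simp
    then have "real n * x \<ge> (real m + 1) * x" using xp by (rule mult_right_mono)
    then show False using h hn by (simp add: algebra_simps)
  qed
qed

lemma gA:
  assumes "(x,y,z) \<in> pieceA n" "n \<ge> 1"
  shows "gauss3 (x,y,z) = (1/x - real n, y/x, z/x)"
proof -
  have xp: "x > 0" using A_floor[OF assms] by simp
  have ne: "(x,y,z) \<noteq> (0,0,0)" using xp by simp
  have ex: "\<exists>n\<ge>1. (x,y,z)\<in>pieceA n" using assms by blast
  have th: "(THE n. n \<ge> 1 \<and> (x,y,z)\<in>pieceA n) = n"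
  proof (rule the_equality)
    show "n \<ge> 1 \<and> (x,y,z)\<in>pieceA n" using assms by simp
  next
    fix m assume "m \<ge> 1 \<and> (x,y,z)\<in>pieceA m"
    then have "\<lfloor>1/x\<rfloor> = int m" using A_floor by blast
    then show "m = n" using A_floor(1)[OF assms] by simp
  qed
  show ?thesis unfolding gauss3_def prod.case
    apply (subst if_not_P[OF ne]) apply (subst if_P[OF ex]) unfolding Let_def th by (rule refl)
qed

lemma gB:
  assumes "(x,y,z) \<in> pieceB n" "n \<ge> 1" "(x,y,z) \<noteq> (0,0,0)"
    "\<not> (\<exists>n\<ge>1. (x,y,z)\<in>pieceA n)"
  shows "gauss3 (x,y,z) = ((1-y)/x - real n + 1, (x-y+z)/x, (x-y)/x)"
proof -
  have ex: "\<exists>n\<ge>1. (x,y,z)\<in>pieceB n" using assms by blast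
  have th: "(THE n. n \<ge> 1 \<and> (x,y,z)\<in>pieceB n) = n"
    by (rule the_equality) (use assms B_uniq in auto)
  show ?thesis unfolding gauss3_def prod.case
    apply (subst if_not_P[OF assms(3)]) apply (subst if_not_P[OF assms(4)])
    apply (subst if_P[OF ex]) unfolding Let_def th by (rule refl)
qed

lemma gC:
  assumes "(x,y,z) \<in> pieceC n" "n \<ge> 1" "(x,y,z) \<noteq> (0,0,0)"
    "\<not> (\<exists>n\<ge>1. (x,y,z)\<in>pieceA n)" "\<not> (\<exists>n\<ge>1. (x,y,z)\<in>pieceB n)"
  shows "gauss3 (x,y,z) = ((1-z)/x - real n + 1, (x-z)/x, (y-z)/x)"
proof -
  have ex: "\<exists>n\<ge>1. (x,y,z)\<in>pieceC n" using assms by blast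
  have th: "(THE n. n \<ge> 1 \<and> (x,y,z)\<in>pieceC n) = n"
    by (rule the_equality) (use assms C_uniq in auto)
  show ?thesis unfolding gauss3_def prod.case
    apply (subst if_not_P[OF assms(3)]) apply (subst if_not_P[OF assms(4)])
    apply (subst if_not_P[OF assms(5)])
    apply (subst if_P[OF ex]) unfolding Let_def th by (rule refl)
qed


lemma stepA:
  assumes "(x,y,z) \<in> pieceA n" "n \<ge> 1" "intp N (x,y,z)"
  shows "gauss3 (x,y,z) \<in> S \<and> fst (gauss3 (x,y,z)) < 1 \<and> intp (N*x) (gauss3 (x,y,z))"
proof -
  have xp: "x > 0" using A_floor[OF assms(1,2)] by simp
  have fl: "\<lfloor>1/x\<rfloor> = int n" using A_floor[OF assms(1,2)] by simp
  have n1: "real n \<le> 1/x" "1/x < real n + 1" using fl by (simp_all add: floor_eq_iff)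
  have h: "0 \<le> z" "z \<le> y" "y \<le> 1 - real n * x" using assms by (auto simp: pieceA_def)
  have e1: "(1 - real n * x)/x = 1/x - real n" using xp by (simp add: field_simps)
  have "y/x \<le> (1 - real n * x)/x" using h xp by (simp add: divide_right_mono)
  then have a1: "y/x \<le> 1/x - real n" using e1 by simp
  have a2: "z/x \<le> y/x" using h xp by (simp add: divide_right_mono)
  have a3: "0 \<le> z/x" using h xp by simp
  have I: "N \<in> \<int>" "N*x \<in> \<int>" "N*y \<in> \<int>" "N*z \<in> \<int>" using assms(3) by (auto simp: intp_def)
  have i1: "N*x*(1/x - real n) = N - of_nat n * (N*x)" using xp by (simp add: field_simps)
  have i2: "N*x*(y/x) = N*y" using xp by simp
  have i3: "N*x*(z/x) = N*z" using xp by simp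
  have "intp (N*x) (1/x - real n, y/x, z/x)" unfolding intp_def using I i1 i2 i3
    by (simp add: Ints_diff Ints_mult)
  then show ?thesis using gA[OF assms(1,2)] a1 a2 a3 n1 by (simp add: S_mem)
qed

lemma stepB:
  assumes "(x,y,z) \<in> pieceB n" "n \<ge> 1" "intp N (x,y,z)" "x > 0"
    "\<not> (\<exists>n\<ge>1. (x,y,z)\<in>pieceA n)"
  shows "gauss3 (x,y,z) \<in> S \<and> fst (gauss3 (x,y,z)) < 1 \<and> intp (N*x) (gauss3 (x,y,z))"
proof -
  have xp: "x > 0" by fact
  have ne: "(x,y,z) \<noteq> (0,0,0)" using xp by simp
  have h: "0 \<le> z" "z \<le> 1 - real n * x" "1 - real n * x < y" "y \<le> x"
    using assms by (auto simp: pieceB_def)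
  have e1: "(1-y)/x - real n + 1 = 1 + (1 - real n * x - y)/x" using xp by (simp add: field_simps)
  have e2: "(1-y)/x - real n + 1 - (x-y+z)/x = (1 - real n * x - z)/x" using xp by (simp add: field_simps)
  have e3: "(x-y+z)/x - (x-y)/x = z/x" using xp by (simp add: field_simps)
  have a1: "(1 - real n * x - y)/x < 0" using h xp by (simp add: divide_neg_pos)
  have a2: "(1 - real n * x - z)/x \<ge> 0" using h xp by simp
  have a3: "z/x \<ge> 0" using h xp by simp
  have a4: "(x-y)/x \<ge> 0" using h xp by simp
  have I: "N \<in> \<int>" "N*x \<in> \<int>" "N*y \<in> \<int>" "N*z \<in> \<int>" using assms(3) by (auto simp: intp_def)
  have i1: "N*x*((1-y)/x - real n + 1) = N - N*y - of_nat n * (N*x) + N*x" using xp by (simp add: field_simps)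
  have i2: "N*x*((x-y+z)/x) = N*x - N*y + N*z" using xp by (simp add: field_simps)
  have i3: "N*x*((x-y)/x) = N*x - N*y" using xp by (simp add: field_simps)
  have "intp (N*x) ((1-y)/x - real n + 1, (x-y+z)/x, (x-y)/x)" unfolding intp_def using I i1 i2 i3
    by (simp add: Ints_diff Ints_mult Ints_add)
  then show ?thesis using gB[OF assms(1,2) ne assms(5)] e1 e2 e3 a1 a2 a3 a4
    by (simp add: S_mem)
qed

lemma stepC:
  assumes "(x,y,z) \<in> pieceC n" "n \<ge> 1" "intp N (x,y,z)" "x > 0"
    "\<not> (\<exists>n\<ge>1. (x,y,z)\<in>pieceA n)" "\<not> (\<exists>n\<ge>1. (x,y,z)\<in>pieceB n)"
  shows "gauss3 (x,y,z) \<in> S \<and> fst (gauss3 (x,y,z)) < 1 \<and> intp (N*x) (gauss3 (x,y,z))"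
proof -
  have xp: "x > 0" by fact
  have ne: "(x,y,z) \<noteq> (0,0,0)" using xp by simp
  have h: "1 - real n * x < z" "z \<le> y" "y \<le> x" "x \<le> 1/real n"
    using assms by (auto simp: pieceC_def)
  have hn: "real n * x \<le> 1" using h(4) assms(2) by (simp add: field_simps)
  have e1: "(1-z)/x - real n + 1 = 1 + (1 - real n * x - z)/x" using xp by (simp add: field_simps)
  have e2: "(1-z)/x - real n + 1 - (x-z)/x = (1 - real n * x)/x" using xp by (simp add: field_simps)
  have e3: "(x-z)/x - (y-z)/x = (x-y)/x" using xp by (simp add: field_simps)
  have a1: "(1 - real n * x - z)/x < 0" using h xp by (simp add: divide_neg_pos)
  have a2: "(1 - real n * x)/x \<ge> 0" using hn xp by simp
  have a3: "(x-y)/x \<ge> 0" using h xp by simp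
  have a4: "(y-z)/x \<ge> 0" using h xp by simp
  have I: "N \<in> \<int>" "N*x \<in> \<int>" "N*y \<in> \<int>" "N*z \<in> \<int>" using assms(3) by (auto simp: intp_def)
  have i1: "N*x*((1-z)/x - real n + 1) = N - N*z - of_nat n * (N*x) + N*x" using xp by (simp add: field_simps)
  have i2: "N*x*((x-z)/x) = N*x - N*z" using xp by (simp add: field_simps)
  have i3: "N*x*((y-z)/x) = N*y - N*z" using xp by (simp add: field_simps)
  have "intp (N*x) ((1-z)/x - real n + 1, (x-z)/x, (y-z)/x)" unfolding intp_def using I i1 i2 i3
    by (simp add: Ints_diff Ints_mult Ints_add)
  then show ?thesis using gC[OF assms(1,2) ne assms(5,6)] e1 e2 e3 a1 a2 a3 a4
    by (simp add: S_mem)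
qed


lemma step:
  assumes "(x,y,z) \<in> S" "(x,y,z) \<noteq> (0,0,0)" "intp N (x,y,z)"
  shows "gauss3 (x,y,z) \<in> S \<and> fst (gauss3 (x,y,z)) < 1 \<and> intp (N*x) (gauss3 (x,y,z))"
proof -
  have s: "0 \<le> z" "z \<le> y" "y \<le> x" "x \<le> 1" using assms(1) by (auto simp: S_mem)
  have xp: "x > 0" using s assms(2) by force
  define m where "m = nat \<lfloor>1/x\<rfloor>"
  have "1 \<le> 1/x" using xp s by (simp add: field_simps)
  then have fl1: "1 \<le> \<lfloor>1/x\<rfloor>" by linarith
  have mi: "int m = \<lfloor>1/x\<rfloor>" unfolding m_def by (rule nat_0_le) (use fl1 in linarith)
  have m1: "m \<ge> 1" using fl1 mi by linarith
  have mr: "real m = of_int \<lfloor>1/x\<rfloor>" using mi by (metis of_int_of_nat_eq)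
  have mle: "real m \<le> 1/x" "1/x < real m + 1" unfolding mr by (rule of_int_floor_le, rule real_of_int_floor_add_one_gt)
  have x1: "x \<le> 1/real m" using mle(1) m1 xp by (simp add: field_simps)
  have x2: "1/real (m+1) < x" using mle(2) xp by (simp add: field_simps)
  have r1: "real m * x \<le> 1" using mle(1) xp by (simp add: field_simps)
  have r2: "1 - real m * x < x" using mle(2) xp by (simp add: field_simps)
  have notA: "\<not> (\<exists>n\<ge>1. (x,y,z)\<in>pieceA n)" if "\<not> y \<le> 1 - real m * x"
  proof
    assume "\<exists>n\<ge>1. (x,y,z)\<in>pieceA n"
    then obtain n where n: "n \<ge> 1" "(x,y,z)\<in>pieceA n" by blast
    have "int n = int m" using A_floor(1)[OF n(2,1)] mi by simp
    then have "n = m" by simp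
    then show False using n that by (auto simp: pieceA_def)
  qed
  show ?thesis
  proof (cases "y \<le> 1 - real m * x")
    case True
    then have "(x,y,z) \<in> pieceA m" using assms(1) s x1 x2 by (simp add: pieceA_def)
    then show ?thesis using stepA m1 assms(3) by blast
  next
    case nA: False
    show ?thesis
    proof (cases "z \<le> 1 - real m * x")
      case True
      then have "(x,y,z) \<in> pieceB m" using assms(1) s nA by (simp add: pieceB_def)
      then show ?thesis using stepB m1 assms(3) xp notA[OF nA] by blast
    next
      case False
      have notB: "\<not> (\<exists>n\<ge>1. (x,y,z)\<in>pieceB n)"
      proof
        assume "\<exists>n\<ge>1. (x,y,z)\<in>pieceB n"
        then obtain n where n: "n \<ge> 1" "(x,y,z)\<in>pieceB n" by blast
        have h: "z \<le> 1 - real n * x" "1 - real n * x < y" using n by (auto simp: pieceB_def)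
        have "n < m"
        proof (rule ccontr)
          assume "\<not> n < m"
          then have "real m \<le> real n" by simp
          then have "real m * x \<le> real n * x" using xp by (simp add: mult_right_mono)
          then show False using h False by linarith
        qed
        then have "real n + 1 \<le> real m" by simp
        then have "(real n + 1) * x \<le> real m * x" using xp by (simp add: mult_right_mono)
        then show False using h r1 s by (simp add: algebra_simps)
      qed
      have "(x,y,z) \<in> pieceC m" using assms(1) s False x1 by (simp add: pieceC_def)
      then show ?thesis using stepC m1 assms(3) xp notA[OF nA] notB by blast
    qed
  qed
qed

lemma reach:
  "\<forall>N x y z. (x,y,z) \<in> S \<longrightarrow> x < 1 \<longrightarrow> N > 0 \<longrightarrow> intp N (x,y,z) \<longrightarrow> N*x = real a
     \<longrightarrow> (\<exists>k::nat. (gauss3 ^^ k) (x, y, z) = (0, 0, 0))"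
proof (induction a rule: less_induct)
  case (less a)
  show ?case
  proof (intro allI impI)
    fix N x y z
    assume p: "(x,y,z) \<in> S" "x < 1" "N > 0" "intp N (x,y,z)" "N*x = real a"
    show "\<exists>k::nat. (gauss3 ^^ k) (x, y, z) = (0, 0, 0)"
    proof (cases "(x,y,z) = (0,0,0)")
      case True
      then show ?thesis by (intro exI[of _ 0]) simp
    next
      case False
      have s: "0 \<le> z" "z \<le> y" "y \<le> x" "x \<le> 1" using p(1) by (auto simp: S_mem)
      have xp: "x > 0" using s False by force
      obtain x' y' z' where g: "gauss3 (x,y,z) = (x',y',z')" by (cases "gauss3 (x,y,z)") auto
      have st: "(x',y',z') \<in> S" "x' < 1" "intp (N*x) (x',y',z')"
        using step[OF p(1) False p(4)] g by auto
      have Np: "N*x > 0" using p(3) xp by simp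
      have "N*x*x' \<in> \<int>" using st(3) by (simp add: intp_def)
      then obtain i where i: "N*x*x' = of_int i" by (auto elim: Ints_cases)
      have x'0: "x' \<ge> 0" using st(1) by (auto simp: S_def)
      have "N*x*x' \<ge> 0" using Np x'0 by simp
      then have i0: "i \<ge> 0" using i by simp
      have "N*x*x' < N*x" using mult_strict_left_mono[OF st(2) Np] by simp
      then have lt: "nat i < a" using i i0 p(5)
        by (metis of_int_less_iff of_int_of_nat_eq of_nat_less_iff int_nat_eq)
      have ii: "N*x*x' = real (nat i)" using i i0 by simp
      obtain k where k: "(gauss3 ^^ k) (x',y',z') = (0,0,0)"
        using less.IH[OF lt] st Np ii by blast
      show ?thesis
        by (rule exI[of _ "Suc k"]) (simp add: funpow_Suc_right g k del: funpow.simps)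
    qed
  qed
qed

theorem mainTheorem13:
  fixes x y z :: real
  assumes "(x, y, z) \<in> S" and "x \<in> \<rat>" and "y \<in> \<rat>" and "z \<in> \<rat>"
  shows "\<exists>k::nat. (gauss3 ^^ k) (x, y, z) = (0, 0, 0)"
proof -
  obtain a1 b1 where 1: "b1 > 0" "x = of_int a1 / of_int b1" using assms(2) by (auto elim: Rats_cases')
  obtain a2 b2 where 2: "b2 > 0" "y = of_int a2 / of_int b2" using assms(3) by (auto elim: Rats_cases')
  obtain a3 b3 where 3: "b3 > 0" "z = of_int a3 / of_int b3" using assms(4) by (auto elim: Rats_cases')
  define N :: real where "N = of_int (b1*b2*b3)"
  have Np: "N > 0" using 1 2 3 unfolding N_def by simp
  have "N*x = of_int (a1*b2*b3)" using 1 2 3 unfolding N_def by (simp add: field_simps)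
  moreover have "N*y = of_int (a2*b1*b3)" using 1 2 3 unfolding N_def by (simp add: field_simps)
  moreover have "N*z = of_int (a3*b1*b2)" using 1 2 3 unfolding N_def by (simp add: field_simps)
  moreover have "N \<in> \<int>" unfolding N_def by simp
  ultimately have ip: "intp N (x,y,z)" unfolding intp_def by (metis Ints_of_int case_prod_conv)
  show ?thesis
  proof (cases "(x,y,z) = (0,0,0)")
    case True
    then show ?thesis by (intro exI[of _ 0]) simp
  next
    case False
    have s: "0 \<le> z" "z \<le> y" "y \<le> x" "x \<le> 1" using assms(1) by (auto simp: S_mem)
    have xp: "x > 0" using s False by force
    obtain x' y' z' where g: "gauss3 (x,y,z) = (x',y',z')" by (cases "gauss3 (x,y,z)") auto
    have st: "(x',y',z') \<in> S" "x' < 1" "intp (N*x) (x',y',z')"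
      using step[OF assms(1) False ip] g by auto
    have Np': "N*x > 0" using Np xp by simp
    have "N*x*x' \<in> \<int>" using st(3) by (simp add: intp_def)
    then obtain i where i: "N*x*x' = of_int i" by (auto elim: Ints_cases)
    have x'0: "x' \<ge> 0" using st(1) by (auto simp: S_def)
    have "N*x*x' \<ge> 0" using Np' x'0 by simp
    then have i0: "i \<ge> 0" using i by simp
    have ii: "N*x*x' = real (nat i)" using i i0 by simp
    obtain k where k: "(gauss3 ^^ k) (x',y',z') = (0,0,0)"
      using reach[of "nat i"] st Np' ii by blast
    show ?thesis
      by (rule exI[of _ "Suc k"]) (simp add: funpow_Suc_right g k del: funpow.simps)
  qed
qed

end
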